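(* For every matrix $A\in\mathbb{R}^{m\times n}$ and every $\epsilon>0$ there exists $t_0$ such that for every perturbed fictitious play system $(U,V)$ for $A$, $$\max V(t)-\min U(t)\le\epsilon t\quad\text{for all } t\ge t_0.$$
   Context: An iterative play system $(U,V)$ for $A\in\mathbb{R}^{m\times n}$ is a pair of sequences $U(0),U(1),\dots\in\mathbb{R}^n$ and $V(0),V(1),\dots\in\mathbb{R}^m$ such that $\min U(0)=\max V(0)$ and, for each $t$, $U(t+1)=U(t)+A_{i(t),*}$ and $V(t+1)=V(t)+A_{*,j(t)}$ for some indices $i(t)\in\{1,\dots,m\}$, $j(t)\in\{1,\dots,n\}$, where $A_{i,*}$ is the $i$th row and $A_{*,j}$ the $j$th column of $A$; $\max$, $\min$ of a vector denote its largest/smallest entry. Let $a=\max_{i,j}|A_{i,j}|$. A perturbed fictitious play system (PFP-system) is an iterative play system for which there exist vectors $E_V(t)\in\mathbb{R}^m$, $E_U(t)\in\mathbb{R}^n$ with $\|E_V(t)\|_\infty<a$ and $\|E_U(t)\|_\infty<a$ for each $t$, such that $i(t+1)\in\arg\max[V(t)+E_V(t)]$ and $j(t+1)\in\arg\min[U(t)+E_U(t)]$ for each $t$. *)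

theory Defs
  imports "HOL-Analysis.Analysis"
begin

text \<open>Vectors in R^k are modelled as real^'k for a finite index type 'k;
  an m x n matrix is real^'n^'m (rows indexed by 'm, columns by 'n).\<close>

definition vmax :: "real^'k \<Rightarrow> real" where
  "vmax x = Max (range (\<lambda>k. x $ k))"

definition vmin :: "real^'k \<Rightarrow> real" where
  "vmin x = Min (range (\<lambda>k. x $ k))"

definition mabs :: "real^'n^'m \<Rightarrow> real" where
  "mabs A = Max (range (\<lambda>(i, j). \<bar>A $ i $ j\<bar>))"

definition iterative_play_with ::
  "real^'n^'m \<Rightarrow> (nat \<Rightarrow> real^'n) \<Rightarrow> (nat \<Rightarrow> real^'m) \<Rightarrow> (nat \<Rightarrow> 'm) \<Rightarrow> (nat \<Rightarrow> 'n) \<Rightarrow> bool" where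
  "iterative_play_with A U V i j \<longleftrightarrow>
     vmin (U 0) = vmax (V 0) \<and>
     (\<forall>t. U (Suc t) = U t + row (i t) A \<and> V (Suc t) = V t + column (j t) A)"

definition iterative_play_system :: "real^'n^'m \<Rightarrow> (nat \<Rightarrow> real^'n) \<Rightarrow> (nat \<Rightarrow> real^'m) \<Rightarrow> bool" where
  "iterative_play_system A U V \<longleftrightarrow> (\<exists>i j. iterative_play_with A U V i j)"

definition PFP_system :: "real^'n^'m \<Rightarrow> (nat \<Rightarrow> real^'n) \<Rightarrow> (nat \<Rightarrow> real^'m) \<Rightarrow> bool" where
  "PFP_system A U V \<longleftrightarrow>
     (\<exists>i j EV EU. iterative_play_with A U V i j \<and>
        (\<forall>t. (\<forall>k. \<bar>EV t $ k\<bar> < mabs A) \<and> (\<forall>k. \<bar>EU t $ k\<bar> < mabs A) \<and>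
             (\<forall>k. (V t + EV t) $ k \<le> (V t + EV t) $ i (Suc t)) \<and>
             (\<forall>k. (U t + EU t) $ j (Suc t) \<le> (U t + EU t) $ k)))"

end

theory Submission
  imports Defs
begin


definition smax :: "'a set \<Rightarrow> ('a \<Rightarrow> real) \<Rightarrow> real" where
  "smax S f = Max (f ` S)"
definition smin :: "'a set \<Rightarrow> ('a \<Rightarrow> real) \<Rightarrow> real" where
  "smin S f = Min (f ` S)"

lemma smax_ge: "finite S \<Longrightarrow> k \<in> S \<Longrightarrow> f k \<le> smax S f"
  unfolding smax_def by simp
lemma smin_le: "finite S \<Longrightarrow> k \<in> S \<Longrightarrow> smin S f \<le> f k"
  unfolding smin_def by simp
lemma smax_le: "finite S \<Longrightarrow> S \<noteq> {} \<Longrightarrow> (\<And>k. k \<in> S \<Longrightarrow> f k \<le> b) \<Longrightarrow> smax S f \<le> b"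
  unfolding smax_def by simp
lemma smin_ge: "finite S \<Longrightarrow> S \<noteq> {} \<Longrightarrow> (\<And>k. k \<in> S \<Longrightarrow> b \<le> f k) \<Longrightarrow> b \<le> smin S f"
  unfolding smin_def by simp
lemma smin_le_smax: "finite S \<Longrightarrow> S \<noteq> {} \<Longrightarrow> smin S f \<le> smax S f"
  by (metis all_not_in_conv order_trans smax_ge smin_le)

lemma smax_close:
  assumes "finite S" "S \<noteq> {}" "\<And>k. k \<in> S \<Longrightarrow> f k \<le> g k + e"
  shows "smax S f \<le> smax S g + e"
proof (rule smax_le[OF assms(1,2)])
  fix k assume k: "k \<in> S"
  have "g k \<le> smax S g" using smax_ge[OF assms(1) k] .
  then show "f k \<le> smax S g + e" using assms(3)[OF k] by linarith
qed
lemma smin_close: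
  assumes "finite S" "S \<noteq> {}" "\<And>k. k \<in> S \<Longrightarrow> f k \<le> g k + e"
  shows "smin S f \<le> smin S g + e"
proof -
  have "smin S f - e \<le> smin S g"
  proof (rule smin_ge[OF assms(1,2)])
    fix k assume k: "k \<in> S"
    have "smin S f \<le> f k" using smin_le[OF assms(1) k] .
    then show "smin S f - e \<le> g k" using assms(3)[OF k] by linarith
  qed
  then show ?thesis by simp
qed

definition valid :: "('m \<Rightarrow> 'n \<Rightarrow> real) \<Rightarrow> real \<Rightarrow> 'm set \<Rightarrow> 'n set \<Rightarrow>
   (nat \<Rightarrow> 'n \<Rightarrow> real) \<Rightarrow> (nat \<Rightarrow> 'm \<Rightarrow> real) \<Rightarrow> (nat \<Rightarrow> 'm) \<Rightarrow> (nat \<Rightarrow> 'n) \<Rightarrow> nat \<Rightarrow> bool" where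
  "valid A c R C U V i j N \<longleftrightarrow>
     (\<forall>t\<le>N. i t \<in> R \<and> j t \<in> C) \<and>
     (\<forall>t<N. (\<forall>k. U (Suc t) k = U t k + A (i t) k) \<and> (\<forall>k. V (Suc t) k = V t k + A k (j t))) \<and>
     (\<forall>t<N. smax R (V t) - 2 * c \<le> V t (i (Suc t)) \<and> U t (j (Suc t)) \<le> smin C (U t) + 2 * c)"

lemma valid_dist:
  assumes v: "valid A c R C U V i j N" and a: "\<forall>k l. \<bar>A k l\<bar> \<le> a"
  shows "t + d \<le> N \<Longrightarrow> \<bar>V (t+d) k - V t k\<bar> \<le> a * d \<and> \<bar>U (t+d) l - U t l\<bar> \<le> a * d"
proof (induction d)
  case 0 then show ?case by simp
next
  case (Suc d)
  have st: "t + d < N" using Suc by simp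
  have "V (Suc (t+d)) k = V (t+d) k + A k (j (t+d))" "U (Suc (t+d)) l = U (t+d) l + A (i (t+d)) l"
    using v st unfolding valid_def by auto
  moreover have "\<bar>A k (j (t+d))\<bar> \<le> a" "\<bar>A (i (t+d)) l\<bar> \<le> a" using a by auto
  ultimately show ?case using Suc by (auto simp: algebra_simps)
qed

lemma valid_sums:
  assumes v: "valid A c R C U V i j N"
  shows "t \<le> N \<Longrightarrow> V t k = V 0 k + (\<Sum>s<t. A k (j s)) \<and> U t l = U 0 l + (\<Sum>s<t. A (i s) l)"
proof (induction t)
  case 0 then show ?case by simp
next
  case (Suc t)
  then show ?case using v unfolding valid_def by auto
qed

lemma valid_dual:
  fixes A :: "'m::finite \<Rightarrow> 'n::finite \<Rightarrow> real"
  assumes v: "valid A c R C U V i j N" and ne: "R \<noteq> {}" "C \<noteq> {}"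
  shows "smin R (V N) \<le> smax C (U N) + smax R (V 0) - smin C (U 0)"
proof (cases "N = 0")
  case True
  then show ?thesis using smin_le_smax[of R "V 0"] smin_le_smax[of C "U 0"] ne by simp
next
  case False
  have iR: "\<And>s. s < N \<Longrightarrow> i s \<in> R" and jC: "\<And>s. s < N \<Longrightarrow> j s \<in> C"
    using v unfolding valid_def by auto
  have sV: "\<And>k. V N k = V 0 k + (\<Sum>s<N. A k (j s))" and sU: "\<And>l. U N l = U 0 l + (\<Sum>s<N. A (i s) l)"
    using valid_sums[OF v order_refl] by blast+
  have eq: "(\<Sum>s<N. V N (i s) - V 0 (i s)) = (\<Sum>s<N. U N (j s) - U 0 (j s))"
  proof -
    have "(\<Sum>s<N. V N (i s) - V 0 (i s)) = (\<Sum>s<N. \<Sum>s'<N. A (i s) (j s'))" by (simp add: sV)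
    also have "\<dots> = (\<Sum>s'<N. \<Sum>s<N. A (i s) (j s'))" by (rule sum.swap)
    also have "\<dots> = (\<Sum>s'<N. U N (j s') - U 0 (j s'))" by (simp add: sU)
    finally show ?thesis .
  qed
  have "(\<Sum>s<N. smin R (V N) - smax R (V 0)) \<le> (\<Sum>s<N. V N (i s) - V 0 (i s))"
  proof (rule sum_mono)
    fix s assume "s \<in> {..<N}"
    then have "i s \<in> R" using iR by simp
    then have "smin R (V N) \<le> V N (i s)" "V 0 (i s) \<le> smax R (V 0)"
      by (simp_all add: smin_le smax_ge)
    then show "smin R (V N) - smax R (V 0) \<le> V N (i s) - V 0 (i s)" by linarith
  qed
  also have "\<dots> \<le> (\<Sum>s<N. smax C (U N) - smin C (U 0))" unfolding eq
  proof (rule sum_mono)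
    fix s assume "s \<in> {..<N}"
    then have "j s \<in> C" using jC by simp
    then have "smin C (U 0) \<le> U 0 (j s)" "U N (j s) \<le> smax C (U N)"
      by (simp_all add: smin_le smax_ge)
    then show "U N (j s) - U 0 (j s) \<le> smax C (U N) - smin C (U 0)" by linarith
  qed
  finally have "real N * (smin R (V N) - smax R (V 0)) \<le> real N * (smax C (U N) - smin C (U 0))"
    by simp
  then have "smin R (V N) - smax R (V 0) \<le> smax C (U N) - smin C (U 0)"
    using False by simp
  then show ?thesis by simp
qed



lemma valid_choice:
  assumes "valid A c R C U V i j N" "t < N"
  shows "smax R (V t) - 2 * c \<le> V t (i (Suc t))" "U t (j (Suc t)) \<le> smin C (U t) + 2 * c"
    "i t \<in> R" "j t \<in> C" "i (Suc t) \<in> R" "j (Suc t) \<in> C"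
  using assms unfolding valid_def by auto

lemma spread_rows:
  fixes A :: "'m::finite \<Rightarrow> 'n::finite \<Rightarrow> real"
  assumes v: "valid A c R C U V i j N" and a: "\<forall>k l. \<bar>A k l\<bar> \<le> a"
    and s: "1 \<le> s" "s + T \<le> N" and ne: "R \<noteq> {}"
    and used: "\<forall>k\<in>R. \<exists>s'. s \<le> s' \<and> s' \<le> s + T \<and> i s' = k"
  shows "smax R (V (s+T)) - smin R (V (s+T)) \<le> 2 * a * (T+1) + 2 * c"
proof -
  have "smax R (V (s+T)) - 2 * a * (T+1) - 2 * c \<le> smin R (V (s+T))"
  proof (rule smin_ge[OF finite ne])
    fix k assume k: "k \<in> R"
    obtain s' where s': "s \<le> s'" "s' \<le> s + T" "i s' = k" using used k by blast
    obtain p where p: "s' = Suc p" using s s' by (cases s') auto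
    have pN: "p < N" using p s s' by simp
    have ch: "smax R (V p) - 2 * c \<le> V p k" using valid_choice(1)[OF v pN] p s' by simp
    define d where "d = s + T - p"
    have dT: "p + d = s + T" "d \<le> T + 1" using d_def p s s' by auto
    have dist: "\<And>k'. \<bar>V (s+T) k' - V p k'\<bar> \<le> a * d"
    proof -
      fix k'
      have "p + d \<le> N" using dT(1) s(2) by simp
      from valid_dist[OF v a this, where k=k'] show "\<bar>V (s+T) k' - V p k'\<bar> \<le> a * d"
        unfolding dT(1) by simp
    qed
    have "smax R (V (s+T)) \<le> smax R (V p) + a * d"
    proof (rule smax_close[OF finite ne])
      fix k' show "V (s+T) k' \<le> V p k' + a * d" using dist[of k'] by linarith
    qed
    moreover have "V p k \<le> V (s+T) k + a * d" using dist[of k] by linarith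
    moreover have a0: "0 \<le> a" using a by (meson abs_ge_zero order_trans)
    moreover have "a * d \<le> a * (T+1)" using dT a0 by (intro mult_left_mono) auto
    ultimately show "smax R (V (s+T)) - 2 * a * (T+1) - 2 * c \<le> V (s+T) k"
      using ch by linarith
  qed
  then show ?thesis by linarith
qed

lemma spread_cols:
  fixes A :: "'m::finite \<Rightarrow> 'n::finite \<Rightarrow> real"
  assumes v: "valid A c R C U V i j N" and a: "\<forall>k l. \<bar>A k l\<bar> \<le> a"
    and s: "1 \<le> s" "s + T \<le> N" and ne: "C \<noteq> {}"
    and used: "\<forall>k\<in>C. \<exists>s'. s \<le> s' \<and> s' \<le> s + T \<and> j s' = k"
  shows "smax C (U (s+T)) - smin C (U (s+T)) \<le> 2 * a * (T+1) + 2 * c"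
proof -
  have "smax C (U (s+T)) \<le> smin C (U (s+T)) + 2 * a * (T+1) + 2 * c"
  proof (rule smax_le[OF finite ne])
    fix k assume k: "k \<in> C"
    obtain s' where s': "s \<le> s'" "s' \<le> s + T" "j s' = k" using used k by blast
    obtain p where p: "s' = Suc p" using s s' by (cases s') auto
    have pN: "p < N" using p s s' by simp
    have ch: "U p k \<le> smin C (U p) + 2 * c" using valid_choice(2)[OF v pN] p s' by simp
    define d where "d = s + T - p"
    have dT: "p + d = s + T" "d \<le> T + 1" using d_def p s s' by auto
    have dist: "\<And>k'. \<bar>U (s+T) k' - U p k'\<bar> \<le> a * d"
    proof -
      fix k'
      have "p + d \<le> N" using dT(1) s(2) by simp
      from valid_dist[OF v a this, where l=k'] show "\<bar>U (s+T) k' - U p k'\<bar> \<le> a * d"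
        unfolding dT(1) by simp
    qed
    have "smin C (U p) \<le> smin C (U (s+T)) + a * d"
    proof (rule smin_close[OF finite ne])
      fix k' show "U p k' \<le> U (s+T) k' + a * d" using dist[of k'] by linarith
    qed
    moreover have "U (s+T) k \<le> U p k + a * d" using dist[of k] by linarith
    moreover have a0: "0 \<le> a" using a by (meson abs_ge_zero order_trans)
    moreover have "a * d \<le> a * (T+1)" using dT a0 by (intro mult_left_mono) auto
    ultimately show "U (s+T) k \<le> smin C (U (s+T)) + 2 * a * (T+1) + 2 * c"
      using ch by linarith
  qed
  then show ?thesis by linarith
qed

lemma delete_row:
  fixes A :: "'m::finite \<Rightarrow> 'n::finite \<Rightarrow> real"
  assumes v: "valid A c R C U V i j N" and a: "\<forall>k l. \<bar>A k l\<bar> \<le> a"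
    and t: "t < N" and k: "k \<in> R" and ik: "i (Suc t) \<noteq> k"
  shows "smax R (V (Suc t)) \<le> smax (R - {k}) (V (Suc t)) + 2 * c + 2 * a"
proof -
  have iR: "i (Suc t) \<in> R - {k}" using valid_choice(5)[OF v t] ik by simp
  have ne: "R \<noteq> {}" using k by auto
  have stp: "\<And>k'. V (Suc t) k' = V t k' + A k' (j t)" using v t unfolding valid_def by auto
  show ?thesis
  proof (rule smax_le[OF finite ne])
    fix k' assume k': "k' \<in> R"
    show "V (Suc t) k' \<le> smax (R - {k}) (V (Suc t)) + 2 * c + 2 * a"
    proof (cases "k' = k")
      case False
      then have "V (Suc t) k' \<le> smax (R - {k}) (V (Suc t))" using k' by (intro smax_ge) auto
      moreover have "0 \<le> c"
        using valid_choice(1)[OF v t] smax_ge[OF finite iR[THEN DiffD1], of "V t"] by linarith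
      moreover have "0 \<le> a" using a by (meson abs_ge_zero order_trans)
      ultimately show ?thesis by linarith
    next
      case True
      have "V t k \<le> smax R (V t)" using k by (intro smax_ge) auto
      also have "\<dots> \<le> V t (i (Suc t)) + 2 * c" using valid_choice(1)[OF v t] by simp
      finally have 1: "V t k \<le> V t (i (Suc t)) + 2 * c" .
      have 2: "V (Suc t) (i (Suc t)) \<le> smax (R - {k}) (V (Suc t))" using iR by (intro smax_ge) auto
      have 3: "\<bar>A k (j t)\<bar> \<le> a" "\<bar>A (i (Suc t)) (j t)\<bar> \<le> a" using a by auto
      show ?thesis unfolding True using 1 2 3 stp[of k] stp[of "i (Suc t)"] by linarith
    qed
  qed
qed



lemma delete_col:
  fixes A :: "'m::finite \<Rightarrow> 'n::finite \<Rightarrow> real"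
  assumes v: "valid A c R C U V i j N" and a: "\<forall>k l. \<bar>A k l\<bar> \<le> a"
    and t: "t < N" and l: "l \<in> C" and jl: "j (Suc t) \<noteq> l"
  shows "smin (C - {l}) (U (Suc t)) - 2 * c - 2 * a \<le> smin C (U (Suc t))"
proof -
  have jC: "j (Suc t) \<in> C - {l}" using valid_choice(6)[OF v t] jl by simp
  have ne: "C \<noteq> {}" using l by auto
  have stp: "\<And>k'. U (Suc t) k' = U t k' + A (i t) k'" using v t unfolding valid_def by auto
  show ?thesis
  proof (rule smin_ge[OF finite ne])
    fix k' assume k': "k' \<in> C"
    show "smin (C - {l}) (U (Suc t)) - 2 * c - 2 * a \<le> U (Suc t) k'"
    proof (cases "k' = l")
      case False
      then have "smin (C - {l}) (U (Suc t)) \<le> U (Suc t) k'" using k' by (intro smin_le) auto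
      moreover have "0 \<le> c"
        using valid_choice(2)[OF v t] smin_le[OF finite jC[THEN DiffD1], of "U t"] by linarith
      moreover have "0 \<le> a" using a by (meson abs_ge_zero order_trans)
      ultimately show ?thesis by linarith
    next
      case True
      have "smin C (U t) \<le> U t l" using l by (intro smin_le) auto
      then have 1: "U t (j (Suc t)) \<le> U t l + 2 * c" using valid_choice(2)[OF v t] by simp
      have 2: "smin (C - {l}) (U (Suc t)) \<le> U (Suc t) (j (Suc t))" using jC by (intro smin_le) auto
      have 3: "\<bar>A (i t) l\<bar> \<le> a" "\<bar>A (i t) (j (Suc t))\<bar> \<le> a" using a by auto
      show ?thesis unfolding True using 1 2 3 stp[of l] stp[of "j (Suc t)"] by linarith
    qed
  qed
qed

lemma valid_mono: "valid A c R C U V i j N \<Longrightarrow> M \<le> N \<Longrightarrow> valid A c R C U V i j M"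
  unfolding valid_def by auto

lemma valid_shift:
  fixes A :: "'m::finite \<Rightarrow> 'n::finite \<Rightarrow> real"
  assumes v: "valid A c R C U V i j N" and sT: "s + T \<le> N" and sub: "R' \<subseteq> R" "C' \<subseteq> C"
    and iR: "\<forall>t\<le>T. i (s+t) \<in> R'" and jC: "\<forall>t\<le>T. j (s+t) \<in> C'"
  shows "valid A c R' C' (\<lambda>t. U (s+t)) (\<lambda>t. V (s+t)) (\<lambda>t. i (s+t)) (\<lambda>t. j (s+t)) T"
proof -
  have neR: "R' \<noteq> {}" using iR by auto
  have neC: "C' \<noteq> {}" using jC by auto
  have mR: "\<And>f. smax R' f \<le> smax R f"
    using sub(1) by (intro smax_le[OF finite neR] smax_ge[OF finite]) auto
  have mC: "\<And>f. smin C f \<le> smin C' f"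
    using sub(2) by (intro smin_ge[OF finite neC] smin_le[OF finite]) auto
  show ?thesis unfolding valid_def
  proof (intro conjI allI impI)
    fix t assume "t \<le> T" then show "i (s+t) \<in> R'" using iR by auto
  next
    fix t assume "t \<le> T" then show "j (s+t) \<in> C'" using jC by auto
  next
    fix t k assume t: "t < T"
    then have "s + t < N" using sT by simp
    then show "U (s + Suc t) k = U (s+t) k + A (i (s+t)) k"
      using v unfolding valid_def by auto
  next
    fix t k assume t: "t < T"
    then have "s + t < N" using sT by simp
    then show "V (s + Suc t) k = V (s+t) k + A k (j (s+t))"
      using v unfolding valid_def by auto
  next
    fix t assume t: "t < T"
    then have st: "s + t < N" using sT by simp
    show "smax R' (V (s+t)) - 2 * c \<le> V (s+t) (i (s + Suc t))"
      using valid_choice(1)[OF v st] mR[of "V (s+t)"] by simp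
  next
    fix t assume t: "t < T"
    then have st: "s + t < N" using sT by simp
    show "U (s+t) (j (s + Suc t)) \<le> smin C' (U (s+t)) + 2 * c"
      using valid_choice(2)[OF v st] mC[of "U (s+t)"] by simp
  qed
qed

definition goodbound where
  "goodbound A c R C \<epsilon> T \<longleftrightarrow> (\<forall>N\<ge>T. \<forall>U V i j. valid A c R C U V i j N \<longrightarrow>
     smax R (V N) - smin C (U N) \<le> smax R (V 0) - smin C (U 0) + \<epsilon> * real N)"

lemma goodbound_mono: "goodbound A c R C \<epsilon> T \<Longrightarrow> T \<le> T' \<Longrightarrow> goodbound A c R C \<epsilon> T'"
  unfolding goodbound_def by auto

lemma common_T:
  assumes "finite S" "\<forall>x\<in>S. \<exists>T::nat. Q x T" "\<And>x T T'. Q x T \<Longrightarrow> T \<le> T' \<Longrightarrow> Q x T'"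
  shows "\<exists>T. \<forall>x\<in>S. Q x T"
  using assms(1,2)
proof (induction S rule: finite_induct)
  case empty then show ?case by simp
next
  case (insert x F)
  then obtain T1 where T1: "\<forall>y\<in>F. Q y T1" by auto
  obtain T2 where T2: "Q x T2" using insert by auto
  have "\<forall>y\<in>insert x F. Q y (max T1 T2)"
    using T1 T2 assms(3) by (metis insert_iff max.cobounded1 max.cobounded2)
  then show ?case by blast
qed



lemma main_step:
  fixes A :: "'m::finite \<Rightarrow> 'n::finite \<Rightarrow> real"
  assumes a: "\<forall>k l. \<bar>A k l\<bar> \<le> a" and c0: "0 \<le> c" and eps: "\<epsilon> > 0" and ne: "R \<noteq> {}" "C \<noteq> {}"
    and IHR: "\<forall>k\<in>R. R - {k} \<noteq> {} \<longrightarrow> (\<exists>T. goodbound A c (R - {k}) C (\<epsilon>/4) T)"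
    and IHC: "\<forall>l\<in>C. C - {l} \<noteq> {} \<longrightarrow> (\<exists>T. goodbound A c R (C - {l}) (\<epsilon>/4) T)"
  shows "\<exists>T. goodbound A c R C \<epsilon> T"
proof -
  have a0: "0 \<le> a" using a by (meson abs_ge_zero order_trans)
  obtain T1 where T1: "\<forall>k\<in>{k\<in>R. R - {k} \<noteq> {}}. goodbound A c (R - {k}) C (\<epsilon>/4) T1"
  proof -
    have "\<exists>T. \<forall>k\<in>{k\<in>R. R - {k} \<noteq> {}}. goodbound A c (R - {k}) C (\<epsilon>/4) T"
      by (rule common_T) (use IHR goodbound_mono in auto)
    then show ?thesis using that by blast
  qed
  obtain T2 where T2: "\<forall>l\<in>{l\<in>C. C - {l} \<noteq> {}}. goodbound A c R (C - {l}) (\<epsilon>/4) T2"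
  proof -
    have "\<exists>T. \<forall>l\<in>{l\<in>C. C - {l} \<noteq> {}}. goodbound A c R (C - {l}) (\<epsilon>/4) T"
      by (rule common_T) (use IHC goodbound_mono in auto)
    then show ?thesis using that by blast
  qed
  define T where "T = max (max T1 T2) (nat \<lceil>(8*c + 8*a)/\<epsilon>\<rceil>) + 1"
  have Tle: "T1 \<le> T" "T2 \<le> T" "1 \<le> T" unfolding T_def by auto
  have "(8*c + 8*a)/\<epsilon> \<le> real (nat \<lceil>(8*c + 8*a)/\<epsilon>\<rceil>)" by (rule real_nat_ceiling_ge)
  also have "\<dots> \<le> real T" unfolding T_def by simp
  finally have "8*c + 8*a \<le> \<epsilon> * real T" using eps by (simp add: pos_divide_le_eq mult.commute)
  then have Tbig: "\<epsilon>/4 * real T + 2*c + 2*a \<le> \<epsilon>/2 * real T" by simp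
  define K where "K = 4*a*(real T+1) + 4*c + 2*a*real T"
  define T0 where "T0 = max T (nat \<lceil>2*K/\<epsilon>\<rceil>)"
  show ?thesis
  proof (intro exI[of _ T0], unfold goodbound_def, intro allI impI)
    fix N U V i j assume N: "T0 \<le> N" and v: "valid A c R C U V i j N"
    define g where "g s = smax R (V s) - smin C (U s)" for s
    define D where "D = g 0"
    have iall: "\<And>t. t \<le> N \<Longrightarrow> i t \<in> R \<and> j t \<in> C" using v unfolding valid_def by auto
    have claim: "s \<le> N \<Longrightarrow> g s \<le> D + K + \<epsilon>/2 * real s" for s
    proof (induction s rule: less_induct)
      case (less s)
      show ?case
      proof (cases "s \<le> T")
        case True
        have dist: "\<And>k. \<bar>V s k - V 0 k\<bar> \<le> a * s" "\<And>l. \<bar>U s l - U 0 l\<bar> \<le> a * s"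
          using valid_dist[OF v a, of 0 s] less.prems by auto
        have "smax R (V s) \<le> smax R (V 0) + a * s"
        proof (rule smax_close[OF finite ne(1)])
          fix k show "V s k \<le> V 0 k + a * s" using dist(1)[of k] by linarith
        qed
        moreover have "smin C (U 0) \<le> smin C (U s) + a * s"
        proof (rule smin_close[OF finite ne(2)])
          fix k show "U 0 k \<le> U s k + a * s" using dist(2)[of k] by linarith
        qed
        moreover have "a * s \<le> a * T" using True a0 by (intro mult_left_mono) auto
        moreover have "0 \<le> \<epsilon>/2 * real s" using eps by simp
        moreover have "0 \<le> a * real T" using a0 by simp
        moreover have "0 \<le> 4 * a * (real T + 1)" using a0 by simp
        ultimately show ?thesis unfolding g_def D_def K_def using a0 c0 by linarith
      next
        case False
        define s0 where "s0 = s - T"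
        have s0: "1 \<le> s0" "s0 + T = s" "s0 < s" using False Tle unfolding s0_def by auto
        have IH: "g s0 \<le> D + K + \<epsilon>/2 * real s0" using less.IH[OF s0(3)] less.prems s0 by simp
        have sN: "s0 + T \<le> N" using s0 less.prems by simp
        have real_s: "real s = real s0 + real T" using s0(2) by linarith
        show ?thesis
        proof (cases "(\<forall>k\<in>R. \<exists>s'. s0 \<le> s' \<and> s' \<le> s0 + T \<and> i s' = k) \<and>
                      (\<forall>l\<in>C. \<exists>s'. s0 \<le> s' \<and> s' \<le> s0 + T \<and> j s' = l)")
          case True
          have sp1: "smax R (V s) - smin R (V s) \<le> 2 * a * (T+1) + 2 * c"
            using spread_rows[OF v a s0(1) sN ne(1)] True s0(2) by simp
          have sp2: "smax C (U s) - smin C (U s) \<le> 2 * a * (T+1) + 2 * c"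
            using spread_cols[OF v a s0(1) sN ne(2)] True s0(2) by simp
          have du: "smin R (V s) \<le> smax C (U s) + smax R (V 0) - smin C (U 0)"
            using valid_dual[OF valid_mono[OF v less.prems] ne] .
          have "0 \<le> \<epsilon>/2 * real s" using eps by simp
          moreover have "0 \<le> a * real T" using a0 by simp
          ultimately show ?thesis using sp1 sp2 du unfolding g_def D_def K_def of_nat_add of_nat_1 ring_distribs by linarith
        next
          case False
          then consider (row) k where "k \<in> R" "\<forall>s'. s0 \<le> s' \<and> s' \<le> s0 + T \<longrightarrow> i s' \<noteq> k"
            | (col) l where "l \<in> C" "\<forall>s'. s0 \<le> s' \<and> s' \<le> s0 + T \<longrightarrow> j s' \<noteq> l"
            by blast
          then show ?thesis
          proof cases
            case row
            have iR: "\<forall>t\<le>T. i (s0+t) \<in> R - {k}" using row(2) iall sN by auto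
            have jC: "\<forall>t\<le>T. j (s0+t) \<in> C" using iall sN by auto
            have R'ne: "R - {k} \<noteq> {}" using iR by auto
            have gb: "goodbound A c (R - {k}) C (\<epsilon>/4) T"
            proof -
              have "goodbound A c (R - {k}) C (\<epsilon>/4) T1" using T1 row(1) R'ne by blast
              then show ?thesis using goodbound_mono Tle(1) by blast
            qed
            have vs: "valid A c (R - {k}) C (\<lambda>t. U (s0+t)) (\<lambda>t. V (s0+t)) (\<lambda>t. i (s0+t)) (\<lambda>t. j (s0+t)) T"
              by (rule valid_shift[OF v sN _ _ iR jC]) auto
            have b1: "smax (R - {k}) (V s) - smin C (U s) \<le> smax (R - {k}) (V s0) - smin C (U s0) + \<epsilon>/4 * T"
              using gb vs s0(2) unfolding goodbound_def by fastforce
            have sm1: "s - 1 < N" "Suc (s - 1) = s" using less.prems s0 by auto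
            have "i (Suc (s - 1)) \<noteq> k" using row(2) sm1(2) s0(2) by simp
            from delete_row[OF v a sm1(1) row(1) this]
            have b2: "smax R (V s) \<le> smax (R - {k}) (V s) + 2 * c + 2 * a" using sm1(2) by simp
            have b3: "smax (R - {k}) (V s0) \<le> smax R (V s0)"
              by (intro smax_le[OF finite R'ne] smax_ge[OF finite]) auto
            show ?thesis using IH b1 b2 b3 Tbig unfolding g_def real_s ring_distribs by linarith
          next
            case col
            have jC: "\<forall>t\<le>T. j (s0+t) \<in> C - {l}" using col(2) iall sN by auto
            have iR: "\<forall>t\<le>T. i (s0+t) \<in> R" using iall sN by auto
            have C'ne: "C - {l} \<noteq> {}" using jC by auto
            have gb: "goodbound A c R (C - {l}) (\<epsilon>/4) T"
            proof -
              have "goodbound A c R (C - {l}) (\<epsilon>/4) T2" using T2 col(1) C'ne by blast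
              then show ?thesis using goodbound_mono Tle(2) by blast
            qed
            have vs: "valid A c R (C - {l}) (\<lambda>t. U (s0+t)) (\<lambda>t. V (s0+t)) (\<lambda>t. i (s0+t)) (\<lambda>t. j (s0+t)) T"
              by (rule valid_shift[OF v sN _ _ iR jC]) auto
            have b1: "smax R (V s) - smin (C - {l}) (U s) \<le> smax R (V s0) - smin (C - {l}) (U s0) + \<epsilon>/4 * T"
              using gb vs s0(2) unfolding goodbound_def by fastforce
            have sm1: "s - 1 < N" "Suc (s - 1) = s" using less.prems s0 by auto
            have "j (Suc (s - 1)) \<noteq> l" using col(2) sm1(2) s0(2) by simp
            from delete_col[OF v a sm1(1) col(1) this]
            have b2: "smin (C - {l}) (U s) - 2 * c - 2 * a \<le> smin C (U s)" using sm1(2) by simp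
            have b3: "smin C (U s0) \<le> smin (C - {l}) (U s0)"
              by (intro smin_ge[OF finite C'ne] smin_le[OF finite]) auto
            show ?thesis using IH b1 b2 b3 Tbig unfolding g_def real_s ring_distribs by linarith
          qed
        qed
      qed
    qed
    have gN: "g N \<le> D + K + \<epsilon>/2 * real N" using claim by simp
    have "2*K/\<epsilon> \<le> real (nat \<lceil>2*K/\<epsilon>\<rceil>)" by (rule real_nat_ceiling_ge)
    also have "\<dots> \<le> real N" using N unfolding T0_def by simp
    finally have "2*K \<le> \<epsilon> * real N" using eps by (simp add: pos_divide_le_eq mult.commute)
    then show "smax R (V N) - smin C (U N) \<le> smax R (V 0) - smin C (U 0) + \<epsilon> * real N"
      using gN unfolding g_def D_def by simp
  qed
qed

lemma main:
  fixes A :: "'m::finite \<Rightarrow> 'n::finite \<Rightarrow> real"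
  assumes a: "\<forall>k l. \<bar>A k l\<bar> \<le> a" and c0: "0 \<le> c"
  shows "\<forall>R C. card R + card C = n \<longrightarrow> R \<noteq> {} \<longrightarrow> C \<noteq> {} \<longrightarrow> (\<forall>\<epsilon>>0. \<exists>T. goodbound A c R C \<epsilon> T)"
proof (induction n rule: less_induct)
  case (less n)
  show ?case
  proof (intro allI impI)
    fix R :: "'m set" and C :: "'n set" and \<epsilon> :: real
    assume h: "card R + card C = n" "R \<noteq> {}" "C \<noteq> {}" "\<epsilon> > 0"
    show "\<exists>T. goodbound A c R C \<epsilon> T"
    proof (rule main_step[OF a c0 h(4) h(2,3)])
      show "\<forall>k\<in>R. R - {k} \<noteq> {} \<longrightarrow> (\<exists>T. goodbound A c (R - {k}) C (\<epsilon>/4) T)"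
      proof (intro ballI impI)
        fix k assume k: "k \<in> R" "R - {k} \<noteq> {}"
        have "card (R - {k}) + card C < n" using h(1) card_Diff1_less[OF finite k(1)] by simp
        then have "\<forall>\<epsilon>>0. \<exists>T. goodbound A c (R - {k}) C \<epsilon> T" using less.IH k(2) h(3) by blast
        then show "\<exists>T. goodbound A c (R - {k}) C (\<epsilon>/4) T" using h(4) by simp
      qed
      show "\<forall>l\<in>C. C - {l} \<noteq> {} \<longrightarrow> (\<exists>T. goodbound A c R (C - {l}) (\<epsilon>/4) T)"
      proof (intro ballI impI)
        fix l assume l: "l \<in> C" "C - {l} \<noteq> {}"
        have "card R + card (C - {l}) < n" using h(1) card_Diff1_less[OF finite l(1)] by simp
        then have "\<forall>\<epsilon>>0. \<exists>T. goodbound A c R (C - {l}) \<epsilon> T" using less.IH l(2) h(2) by blast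
        then show "\<exists>T. goodbound A c R (C - {l}) (\<epsilon>/4) T" using h(4) by simp
      qed
    qed
  qed
qed



theorem lemma4:
  fixes A :: "real^'n^'m" and \<epsilon> :: real
  assumes "\<epsilon> > 0"
  shows "\<exists>t0::nat. \<forall>U V. PFP_system A U V \<longrightarrow>
           (\<forall>t\<ge>t0. vmax (V t) - vmin (U t) \<le> \<epsilon> * real t)"
proof -
  define B where "B = (\<lambda>k l. A $ k $ l)"
  define a where "a = mabs A"
  have aB: "\<forall>k l. \<bar>B k l\<bar> \<le> a"
  proof (intro allI)
    fix k l
    have "\<bar>A $ k $ l\<bar> \<in> range (\<lambda>(i, j). \<bar>A $ i $ j\<bar>)" by (rule image_eqI[of _ _ "(k, l)"]) auto
    then show "\<bar>B k l\<bar> \<le> a" unfolding B_def a_def mabs_def by (intro Max_ge) auto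
  qed
  have a0: "0 \<le> a" using aB by (meson abs_ge_zero order_trans)
  have "\<forall>\<epsilon>>0. \<exists>T. goodbound B a (UNIV::'m set) (UNIV::'n set) \<epsilon> T"
    using main[OF aB a0, of "card (UNIV::'m set) + card (UNIV::'n set)"] by blast
  then obtain T where T: "goodbound B a (UNIV::'m set) (UNIV::'n set) \<epsilon> T" using assms by blast
  show ?thesis
  proof (intro exI[of _ T] allI impI)
    fix U V t assume P: "PFP_system A U V" and t: "T \<le> t"
    obtain i j EV EU where ip: "iterative_play_with A U V i j" and
      pf: "\<forall>t. (\<forall>k. \<bar>EV t $ k\<bar> < mabs A) \<and> (\<forall>k. \<bar>EU t $ k\<bar> < mabs A) \<and>
             (\<forall>k. (V t + EV t) $ k \<le> (V t + EV t) $ i (Suc t)) \<and>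
             (\<forall>k. (U t + EU t) $ j (Suc t) \<le> (U t + EU t) $ k)"
      using P unfolding PFP_system_def by blast
    define U' where "U' = (\<lambda>s k. U s $ k)"
    define V' where "V' = (\<lambda>s k. V s $ k)"
    have vm: "\<And>s. vmax (V s) = smax UNIV (V' s)" "\<And>s. vmin (U s) = smin UNIV (U' s)"
      unfolding vmax_def vmin_def smax_def smin_def U'_def V'_def by auto
    have v: "valid B a UNIV UNIV U' V' i j t"
      unfolding valid_def
    proof (intro conjI allI impI)
      fix s k assume "s < t"
      show "U' (Suc s) k = U' s k + B (i s) k"
        using ip unfolding iterative_play_with_def U'_def V'_def B_def by (auto simp: row_def column_def)
    next
      fix s k assume "s < t"
      show "V' (Suc s) k = V' s k + B k (j s)"
        using ip unfolding iterative_play_with_def U'_def V'_def B_def by (auto simp: row_def column_def)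
    next
      fix s assume "s < t"
      show "smax UNIV (V' s) - 2 * a \<le> V' s (i (Suc s))"
      proof -
        have "smax UNIV (V' s) \<le> V' s (i (Suc s)) + 2 * a"
        proof (rule smax_le[OF finite])
          fix k
          have "(V s + EV s) $ k \<le> (V s + EV s) $ i (Suc s)" "\<bar>EV s $ k\<bar> < a" "\<bar>EV s $ i (Suc s)\<bar> < a"
            using pf unfolding a_def by blast+
          then show "V' s k \<le> V' s (i (Suc s)) + 2 * a" unfolding V'_def by simp
        qed simp
        then show ?thesis by simp
      qed
    next
      fix s assume "s < t"
      show "U' s (j (Suc s)) \<le> smin UNIV (U' s) + 2 * a"
      proof -
        have "U' s (j (Suc s)) - 2 * a \<le> smin UNIV (U' s)"
        proof (rule smin_ge[OF finite])
          fix k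
          have "(U s + EU s) $ j (Suc s) \<le> (U s + EU s) $ k" "\<bar>EU s $ k\<bar> < a" "\<bar>EU s $ j (Suc s)\<bar> < a"
            using pf unfolding a_def by blast+
          then show "U' s (j (Suc s)) - 2 * a \<le> U' s k" unfolding U'_def by simp
        qed simp
        then show ?thesis by simp
      qed
    qed auto
    have "smax UNIV (V' t) - smin UNIV (U' t) \<le> smax UNIV (V' 0) - smin UNIV (U' 0) + \<epsilon> * real t"
      using T t v unfolding goodbound_def by blast
    moreover have "smax UNIV (V' 0) = smin UNIV (U' 0)"
      using ip vm unfolding iterative_play_with_def by metis
    ultimately show "vmax (V t) - vmin (U t) \<le> \<epsilon> * real t" using vm by simp
  qed
qed


end
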